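(* Let $X$ be a topological vector space, $Z$ a locally convex topological vector space, $C\subseteq Z$ a nonempty closed convex cone with $C^-\neq\{0\}$, $x_0\in X$, and $f:X\to\mathcal{F}(Z,C)$ convex-valued. Assume there is a set $B\subseteq Z^*$ with $\{tz^*\colon t\ge0,\ z^*\in B\}=C^-$ such that \[ \forall z\in Z:\ \sup_{z^*\in B}z^*(z)<\infty\qquad\text{and}\qquad\forall V\in\mathcal{V}(0):\ \inf_{z^*\in B}\sup_{z\in V}[-z^*(z)]>0, \] and such that the scalarizations are lower semicontinuous at $x_0$ uniformly with respect to $B$, i.e. for every $\varepsilon>0$ there is a neighborhood $U$ of $x_0$ with $\varphi_{(f,z^* )}(x)>\varphi_{(f,z^* )}(x_0)-\varepsilon$ for all $x\in U$ and all $z^*\in B$. Then $f$ is Hausdorff upper continuous at $x_0$.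
   Context: $\mathcal{F}(Z,C)=\{A\subseteq Z\colon A=\operatorname{cl}(A+C)\}$ (empty set included); $C^-=\{z^*\in Z^*\colon z^*(z)\le0\ \forall z\in C\}$; $\mathcal{V}(0)$ is the system of neighborhoods of $0$ in $Z$. $\varphi_{(f,z^* )}(x)=\inf_{z\in f(x)}(-z^*(z))$, with $\inf\emptyset=+\infty$. $f$ is Hausdorff upper continuous at $x_0$ iff for every neighborhood $V$ of $0$ in $Z$ there is a neighborhood $U$ of $x_0$ with $f(x)\subseteq f(x_0)+V$ for all $x\in U$. *)

theory Defs
  imports "HOL-Analysis.Analysis"
begin

text \<open>Real topological vector spaces: addition and scalar multiplication jointly continuous (stated via the product-topology neighbourhood base).\<close>
class topological_real_vector = real_vector + topological_space +
  assumes continuous_add_tvs: "\<And>x y W. open W \<Longrightarrow> x + y \<in> W \<Longrightarrow>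
      \<exists>U V. open U \<and> open V \<and> x \<in> U \<and> y \<in> V \<and> (\<forall>u\<in>U. \<forall>v\<in>V. u + v \<in> W)"
  assumes continuous_scaleR_tvs: "\<And>(c::real) x W. open W \<Longrightarrow> c *\<^sub>R x \<in> W \<Longrightarrow>
      \<exists>e>0. \<exists>V. open V \<and> x \<in> V \<and> (\<forall>d. \<bar>d - c\<bar> < e \<longrightarrow> (\<forall>v\<in>V. d *\<^sub>R v \<in> W))"

text \<open>Locally convex: every neighbourhood of 0 contains a convex open neighbourhood of 0
  (convexity written out as in the definition of convex, since class specs cannot use the sort-constrained constant).\<close>
class locally_convex_tvs = topological_real_vector +
  assumes locally_convex: "\<And>U::'a set. open U \<Longrightarrow> 0 \<in> U \<Longrightarrow> \<exists>V. open V \<and> 0 \<in> V \<and> V \<subseteq> U \<and>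
      (\<forall>x\<in>V. \<forall>y\<in>V. \<forall>u\<ge>0. \<forall>v\<ge>0. u + v = 1 \<longrightarrow> u *\<^sub>R x + v *\<^sub>R y \<in> V)"

definition is_nbhd :: "'a::topological_space set \<Rightarrow> 'a \<Rightarrow> bool" where
  "is_nbhd S x \<longleftrightarrow> (\<exists>W. open W \<and> x \<in> W \<and> W \<subseteq> S)"

definition topdual :: "('b::topological_real_vector \<Rightarrow> real) set" where
  "topdual = {zs. linear zs \<and> continuous_on UNIV zs}"

definition neg_dual_cone :: "'b::topological_real_vector set \<Rightarrow> ('b \<Rightarrow> real) set" where
  "neg_dual_cone C = {zs \<in> topdual. \<forall>z\<in>C. zs z \<le> 0}"

definition set_plus_Z :: "'b::real_vector set \<Rightarrow> 'b set \<Rightarrow> 'b set" where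
  "set_plus_Z A D = {a + d | a d. a \<in> A \<and> d \<in> D}"

text \<open>The family F(Z,C) of sets A with A = cl(A + C) (empty set included).\<close>
definition FZC :: "'b::topological_real_vector set \<Rightarrow> 'b set set" where
  "FZC C = {A. A = closure (set_plus_Z A C)}"

text \<open>Scalarization phi_(f,z^*)(x) = inf_{z in f x} (- z^*(z)), with inf of empty set = +infinity.\<close>
definition scalarization :: "('a \<Rightarrow> 'b set) \<Rightarrow> ('b \<Rightarrow> real) \<Rightarrow> 'a \<Rightarrow> ereal" where
  "scalarization f zs x = (INF z\<in>f x. ereal (- zs z))"

definition hausdorff_upper_continuous_at ::
  "('a::topological_space \<Rightarrow> 'b::topological_real_vector set) \<Rightarrow> 'a \<Rightarrow> bool" where
  "hausdorff_upper_continuous_at f x0 \<longleftrightarrow>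
     (\<forall>V. is_nbhd V (0::'b) \<longrightarrow>
        (\<exists>U. is_nbhd U x0 \<and> (\<forall>x\<in>U. f x \<subseteq> set_plus_Z (f x0) V)))"

end

theory Submission
  imports Defs
begin


definition sublin :: "('a::real_vector \<Rightarrow> real) \<Rightarrow> bool" where
  "sublin q \<longleftrightarrow> (\<forall>x y. q (x + y) \<le> q x + q y) \<and> (\<forall>t>0. \<forall>x. q (t *\<^sub>R x) \<le> t * q x)"

lemma sublin_add: "sublin q \<Longrightarrow> q (x + y) \<le> q x + q y"
  by (simp add: sublin_def)

lemma sublin_le: "sublin q \<Longrightarrow> t > 0 \<Longrightarrow> q (t *\<^sub>R x) \<le> t * q x"
  by (simp add: sublin_def)

lemma sublin_0: assumes "sublin q" shows "q 0 = 0"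
proof -
  have "q 0 \<le> q 0 + q 0" using sublin_add[OF assms, of 0 0] by simp
  moreover have "q ((1/2) *\<^sub>R 0) \<le> (1/2) * q 0" using sublin_le[OF assms, of "1/2" 0] by simp
  ultimately show ?thesis by simp
qed

lemma sublin_hom: assumes "sublin q" "t > 0" shows "q (t *\<^sub>R x) = t * q x"
proof -
  have "q ((1/t) *\<^sub>R (t *\<^sub>R x)) \<le> (1/t) * q (t *\<^sub>R x)" using sublin_le[OF assms(1), of "1/t" "t *\<^sub>R x"] assms(2) by simp
  moreover have "(1/t) *\<^sub>R (t *\<^sub>R x) = x" using assms(2) by simp
  ultimately have "q x \<le> (1/t) * q (t *\<^sub>R x)" by simp
  hence "t * q x \<le> q (t *\<^sub>R x)" using assms(2) by (simp add: field_simps)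
  with sublin_le[OF assms, of x] show ?thesis by linarith
qed

lemma sublin_hom0: assumes "sublin q" "t \<ge> 0" shows "q (t *\<^sub>R x) = t * q x"
  using assms sublin_hom[OF assms(1)] sublin_0[OF assms(1)]
  by (cases "t = 0") auto

lemma sublin_neg: assumes "sublin q" shows "- q (- x) \<le> q x"
  using sublin_add[OF assms, of x "-x"] sublin_0[OF assms] by simp

lemma shift:
  fixes q :: "'a::real_vector \<Rightarrow> real"
  assumes sq: "sublin q" and cy: "c \<le> q y"
  defines "r \<equiv> \<lambda>x. Inf ((\<lambda>t. q (x + t *\<^sub>R y) - t * c) ` {0..})"
  shows "sublin r" "\<And>x. r x \<le> q x" "r (- y) \<le> - c"
proof -
  have lb: "- q (- x) \<le> q (x + t *\<^sub>R y) - t * c" if "t \<ge> 0" for x t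
  proof -
    have "q (t *\<^sub>R y) \<le> q (x + t *\<^sub>R y) + q (- x)"
      using sublin_add[OF sq, of "x + t *\<^sub>R y" "-x"] by simp
    moreover have "t * c \<le> q (t *\<^sub>R y)" using sublin_hom0[OF sq that] cy that
      by (simp add: mult_left_mono)
    ultimately show ?thesis by simp
  qed
  have bdd: "bdd_below ((\<lambda>t. q (x + t *\<^sub>R y) - t * c) ` {0..})" for x
    using lb by (intro bdd_belowI[where m="- q (- x)"]) auto
  have up: "r x \<le> q (x + t *\<^sub>R y) - t * c" if "t \<ge> 0" for x t
    unfolding r_def using that by (intro cInf_lower[OF _ bdd]) auto
  have gr: "z \<le> r x" if "\<And>t. t \<ge> 0 \<Longrightarrow> z \<le> q (x + t *\<^sub>R y) - t * c" for z x
    unfolding r_def using that by (intro cInf_greatest) auto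
  show "r x \<le> q x" for x using up[of 0 x] by simp
  show "r (- y) \<le> - c" using up[of 1 "-y"] sublin_0[OF sq] by simp
  show "sublin r" unfolding sublin_def
  proof (intro conjI allI impI)
    fix x1 x2
    have key: "r (x1 + x2) \<le> (q (x1 + t1 *\<^sub>R y) - t1 * c) + (q (x2 + t2 *\<^sub>R y) - t2 * c)"
      if "t1 \<ge> 0" "t2 \<ge> 0" for t1 t2
    proof -
      have "r (x1 + x2) \<le> q (x1 + x2 + (t1 + t2) *\<^sub>R y) - (t1 + t2) * c"
        using up that by simp
      also have "x1 + x2 + (t1 + t2) *\<^sub>R y = (x1 + t1 *\<^sub>R y) + (x2 + t2 *\<^sub>R y)"
        by (simp add: algebra_simps)
      finally show ?thesis using sublin_add[OF sq, of "x1 + t1 *\<^sub>R y" "x2 + t2 *\<^sub>R y"]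
        by (simp add: algebra_simps)
    qed
    have "r (x1 + x2) - r x2 \<le> r x1"
    proof (rule gr)
      fix t1 :: real assume t1: "t1 \<ge> 0"
      have "r (x1 + x2) - (q (x1 + t1 *\<^sub>R y) - t1 * c) \<le> r x2"
        by (rule gr) (use key t1 in force)
      thus "r (x1 + x2) - r x2 \<le> q (x1 + t1 *\<^sub>R y) - t1 * c" by simp
    qed
    thus "r (x1 + x2) \<le> r x1 + r x2" by simp
  next
    fix t :: real and x assume t: "t > 0"
    have "r (t *\<^sub>R x) / t \<le> r x"
    proof (rule gr)
      fix s :: real assume s: "s \<ge> 0"
      have "r (t *\<^sub>R x) \<le> q (t *\<^sub>R x + (t * s) *\<^sub>R y) - (t * s) * c"
        using up s t by simp
      also have "t *\<^sub>R x + (t * s) *\<^sub>R y = t *\<^sub>R (x + s *\<^sub>R y)" by (simp add: algebra_simps)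
      also have "q (t *\<^sub>R (x + s *\<^sub>R y)) = t * q (x + s *\<^sub>R y)" using sublin_hom[OF sq t] .
      finally have "r (t *\<^sub>R x) \<le> t * (q (x + s *\<^sub>R y) - s * c)" by (simp add: algebra_simps)
      thus "r (t *\<^sub>R x) / t \<le> q (x + s *\<^sub>R y) - s * c" using t by (simp add: field_simps)
    qed
    thus "r (t *\<^sub>R x) \<le> t * r x" using t by (simp add: field_simps)
  qed
qed

lemma minimal_sublin:
  fixes p :: "'a::real_vector \<Rightarrow> real"
  assumes sp: "sublin p"
  shows "\<exists>q. sublin q \<and> q \<le> p \<and> (\<forall>r. sublin r \<and> r \<le> q \<longrightarrow> r = q)"
proof -
  define A where "A = {q. sublin q \<and> q \<le> p}"
  have po: "partial_order_on A (relation_of (\<lambda>a u. u \<le> a) A)"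
    by (rule partial_order_on_relation_ofI) auto
  have "\<exists>m\<in>A. \<forall>a\<in>A. a \<le> m \<longrightarrow> a = m"
  proof (rule predicate_Zorn[OF po])
    fix C assume C: "C \<in> Chains (relation_of (\<lambda>a u. u \<le> a) A)"
    have CA: "C \<subseteq> A" using Chains_relation_of[OF C] .
    have tot: "a \<le> b \<or> b \<le> a" if "a \<in> C" "b \<in> C" for a b
      using C that unfolding Chains_def relation_of_def by auto
    show "\<exists>u\<in>A. \<forall>a\<in>C. u \<le> a"
    proof (cases "C = {}")
      case True thus ?thesis using sp by (auto simp: A_def)
    next
      case False
      define u where "u = (\<lambda>x. Inf ((\<lambda>q. q x) ` C))"
      have bdd: "bdd_below ((\<lambda>q. q x) ` C)" for x
      proof (intro bdd_belowI[where m="- p (- x)"])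
        fix v assume "v \<in> (\<lambda>q. q x) ` C"
        then obtain q where q: "q \<in> C" "v = q x" by auto
        hence "sublin q" "q \<le> p" using CA by (auto simp: A_def)
        thus "- p (- x) \<le> v" using sublin_neg[of q x] q by (auto simp: le_fun_def intro: order.trans[of _ "- q (-x)"])
      qed
      have ul: "u x \<le> q x" if "q \<in> C" for q x
        unfolding u_def using that by (intro cInf_lower[OF _ bdd]) auto
      have ug: "z \<le> u x" if "\<And>q. q \<in> C \<Longrightarrow> z \<le> q x" for z x
        unfolding u_def using that False by (intro cInf_greatest) auto
      have "sublin u" unfolding sublin_def
      proof (intro conjI allI impI)
        fix x y
        have "u (x + y) \<le> q1 x + q2 y" if qq: "q1 \<in> C" "q2 \<in> C" for q1 q2
        proof -
          obtain m where m: "m \<in> C" "m \<le> q1" "m \<le> q2" using tot[OF qq] qq by blast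
          have "sublin m" using m CA by (auto simp: A_def)
          have "u (x + y) \<le> m (x + y)" using ul m by auto
          also have "\<dots> \<le> m x + m y" using sublin_add[OF \<open>sublin m\<close>] .
          also have "\<dots> \<le> q1 x + q2 y" using m by (auto simp: le_fun_def intro: add_mono)
          finally show ?thesis .
        qed
        hence h1: "u (x + y) - q2 y \<le> u x" if "q2 \<in> C" for q2
          using that by (intro ug) force
        have "u (x + y) - u x \<le> u y"
          by (rule ug) (use h1 in force)
        thus "u (x + y) \<le> u x + u y" by simp
      next
        fix t :: real and x assume t: "t > 0"
        have "u (t *\<^sub>R x) / t \<le> u x"
        proof (rule ug)
          fix q assume q: "q \<in> C"
          hence "sublin q" using CA by (auto simp: A_def)
          have "u (t *\<^sub>R x) \<le> t * q x" using ul[OF q] sublin_le[OF \<open>sublin q\<close> t] by (rule order.trans)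
          thus "u (t *\<^sub>R x) / t \<le> q x" using t by (simp add: field_simps)
        qed
        thus "u (t *\<^sub>R x) \<le> t * u x" using t by (simp add: field_simps)
      qed
      moreover have "u \<le> p"
      proof -
        obtain q where "q \<in> C" using False by auto
        thus ?thesis using ul CA by (force simp: A_def le_fun_def intro: order.trans)
      qed
      ultimately show ?thesis using ul by (auto simp: A_def le_fun_def)
    qed
  qed
  then obtain m where "m \<in> A" "\<forall>a\<in>A. a \<le> m \<longrightarrow> a = m" by blast
  thus ?thesis unfolding A_def by (auto intro: order.trans)
qed

lemma minimal_linear:
  fixes q :: "'a::real_vector \<Rightarrow> real"
  assumes sq: "sublin q" and mn: "\<forall>r. sublin r \<and> r \<le> q \<longrightarrow> r = q"
  shows "linear q"
proof -
  have neg: "q (- y) = - q y" for y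
  proof -
    define r where "r = (\<lambda>x. Inf ((\<lambda>t. q (x + t *\<^sub>R y) - t * q y) ` {0..}))"
    have "sublin r" "\<And>x. r x \<le> q x" "r (- y) \<le> - q y"
      using shift[OF sq order.refl[of "q y"]] unfolding r_def by auto
    hence "r = q" using mn by (auto simp: le_fun_def)
    hence "q (- y) \<le> - q y" using \<open>r (- y) \<le> - q y\<close> by simp
    moreover have "- q (- y) \<le> q y" using sublin_neg[OF sq] .
    ultimately show ?thesis by simp
  qed
  show ?thesis
  proof (rule linearI)
    fix x y
    have "q x = q ((x + y) + (- y))" by simp
    also have "\<dots> \<le> q (x + y) + q (- y)" by (rule sublin_add[OF sq])
    finally have "q x + q y \<le> q (x + y)" using neg[of y] by simp
    thus "q (x + y) = q x + q y" using sublin_add[OF sq, of x y] by simp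
  next
    fix c :: real and x
    show "q (c *\<^sub>R x) = c *\<^sub>R q x"
    proof (cases "c \<ge> 0")
      case True thus ?thesis using sublin_hom0[OF sq] by simp
    next
      case False
      have "q (c *\<^sub>R x) = q ((- c) *\<^sub>R (- x))" by simp
      also have "\<dots> = (- c) * q (- x)" using False by (intro sublin_hom0[OF sq]) auto
      finally show ?thesis using neg[of x] by simp
    qed
  qed
qed

lemma hahn_banach_point:
  fixes p :: "'a::real_vector \<Rightarrow> real"
  assumes sp: "sublin p" and y: "1 \<le> p y"
  shows "\<exists>F. linear F \<and> (\<forall>x. F x \<le> p x) \<and> 1 \<le> F y"
proof -
  define r where "r = (\<lambda>x. Inf ((\<lambda>t. p (x + t *\<^sub>R y) - t * 1) ` {0..}))"
  have r: "sublin r" "\<And>x. r x \<le> p x" "r (- y) \<le> - 1"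
    using shift[OF sp y] unfolding r_def by auto
  obtain q where q: "sublin q" "q \<le> r" "\<forall>s. sublin s \<and> s \<le> q \<longrightarrow> s = q"
    using minimal_sublin[OF r(1)] by blast
  have lq: "linear q" using minimal_linear q by blast
  have "q (- y) \<le> -1" using q(2) r(3) by (auto simp: le_fun_def intro: order.trans)
  hence "1 \<le> q y" using linear_neg[OF lq, of y] by simp
  moreover have "q x \<le> p x" for x using q(2) r(2)[of x] by (auto simp: le_fun_def intro: order.trans)
  ultimately show ?thesis using lq by blast
qed



lemma open_translate:
  fixes S :: "'a::topological_real_vector set"
  assumes "open S" shows "open ((\<lambda>s. a + s) ` S)"
proof (rule Topological_Spaces.openI)
  fix y assume "y \<in> (\<lambda>s. a + s) ` S"
  then obtain s where s: "s \<in> S" "y = a + s" by auto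
  have ya: "y + (- a) \<in> S" using s by simp
  obtain U V where UV: "open U" "open V" "y \<in> U" "- a \<in> V" "\<forall>u\<in>U. \<forall>v\<in>V. u + v \<in> S"
    using continuous_add_tvs[OF assms ya] by blast
  have "U \<subseteq> (\<lambda>s. a + s) ` S"
  proof
    fix u assume "u \<in> U"
    hence "u + - a \<in> S" using UV by blast
    moreover have "u = a + (u + - a)" by simp
    ultimately show "u \<in> (\<lambda>s. a + s) ` S" by blast
  qed
  thus "\<exists>T. open T \<and> y \<in> T \<and> T \<subseteq> (\<lambda>s. a + s) ` S" using UV by blast
qed

lemma open_scale:
  fixes S :: "'a::topological_real_vector set"
  assumes "open S" "c \<noteq> 0" shows "open ((\<lambda>s. c *\<^sub>R s) ` S)"
proof (rule Topological_Spaces.openI)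
  fix y assume "y \<in> (\<lambda>s. c *\<^sub>R s) ` S"
  then obtain s where s: "s \<in> S" "y = c *\<^sub>R s" by auto
  have cy: "(1/c) *\<^sub>R y \<in> S" using s assms(2) by simp
  obtain e V where eV: "e > 0" "open V" "y \<in> V" "\<forall>d. \<bar>d - 1/c\<bar> < e \<longrightarrow> (\<forall>v\<in>V. d *\<^sub>R v \<in> S)"
    using continuous_scaleR_tvs[OF assms(1) cy] by blast
  have "V \<subseteq> (\<lambda>s. c *\<^sub>R s) ` S"
  proof
    fix v assume "v \<in> V"
    hence "(1/c) *\<^sub>R v \<in> S" using eV by auto
    moreover have "v = c *\<^sub>R ((1/c) *\<^sub>R v)" using assms(2) by simp
    ultimately show "v \<in> (\<lambda>s. c *\<^sub>R s) ` S" by blast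
  qed
  thus "\<exists>T. open T \<and> y \<in> T \<and> T \<subseteq> (\<lambda>s. c *\<^sub>R s) ` S" using eV by blast
qed

lemma absorb:
  fixes K :: "'a::topological_real_vector set"
  assumes "open K" "0 \<in> K" shows "\<exists>e>0. \<forall>d. \<bar>d\<bar> < e \<longrightarrow> d *\<^sub>R x \<in> K"
proof -
  have x0: "(0::real) *\<^sub>R x \<in> K" using assms by simp
  obtain e V where "e > 0" "open V" "x \<in> V" "\<forall>d. \<bar>d - 0\<bar> < e \<longrightarrow> (\<forall>v\<in>V. d *\<^sub>R v \<in> K)"
    using continuous_scaleR_tvs[OF assms(1) x0] by blast
  thus ?thesis by auto
qed

definition mink :: "'a::real_vector set \<Rightarrow> 'a \<Rightarrow> real" where
  "mink K x = Inf {t. t > 0 \<and> (1/t) *\<^sub>R x \<in> K}"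

lemma mink_props:
  fixes K :: "'a::topological_real_vector set"
  assumes oK: "open K" and cK: "convex K" and K0: "0 \<in> K"
  shows "sublin (mink K)" "\<And>k. k \<in> K \<Longrightarrow> mink K k \<le> 1" "\<And>z. z \<notin> K \<Longrightarrow> 1 \<le> mink K z"
proof -
  let ?T = "\<lambda>x. {t. t > 0 \<and> (1/t) *\<^sub>R x \<in> K}"
  have ne: "?T x \<noteq> {}" for x
  proof -
    obtain e where e: "e > 0" "\<forall>d. \<bar>d\<bar> < e \<longrightarrow> d *\<^sub>R x \<in> K" using absorb[OF oK K0] by blast
    have "(1 / (2/e)) *\<^sub>R x \<in> K" using e by simp
    thus ?thesis using e(1) by (intro ex_in_conv[THEN iffD1] exI[of _ "2/e"]) simp
  qed
  have bdd: "bdd_below (?T x)" for x by (intro bdd_belowI[where m=0]) auto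
  have lo: "mink K x \<le> t" if "t \<in> ?T x" for x t
    unfolding mink_def using that by (intro cInf_lower[OF _ bdd])
  have gr: "z \<le> mink K x" if "\<And>t. t \<in> ?T x \<Longrightarrow> z \<le> t" for z x
    unfolding mink_def using that ne by (intro cInf_greatest) auto
  show "mink K k \<le> 1" if "k \<in> K" for k using lo[of 1 k] that by simp
  show "1 \<le> mink K z" if z: "z \<notin> K" for z
  proof (rule gr)
    fix t assume t: "t \<in> ?T z"
    show "1 \<le> t"
    proof (rule ccontr)
      assume "\<not> 1 \<le> t"
      hence t1: "t < 1" "t > 0" using t by auto
      have "t *\<^sub>R ((1/t) *\<^sub>R z) + (1 - t) *\<^sub>R 0 \<in> K"
        using t t1 K0 by (intro cK[unfolded convex_def, rule_format]) auto
      thus False using z t1 by simp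
    qed
  qed
  show "sublin (mink K)" unfolding sublin_def
  proof (intro conjI allI impI)
    fix x y
    have key: "mink K (x + y) \<le> s + t" if st: "s \<in> ?T x" "t \<in> ?T y" for s t
    proof (rule lo)
      have sp: "s > 0" "t > 0" using st by auto
      have "(s/(s+t)) *\<^sub>R ((1/s) *\<^sub>R x) + (t/(s+t)) *\<^sub>R ((1/t) *\<^sub>R y) \<in> K"
      proof (rule cK[unfolded convex_def, rule_format])
        show "(1/s) *\<^sub>R x \<in> K" "(1/t) *\<^sub>R y \<in> K" using st by auto
        show "0 \<le> s/(s+t)" "0 \<le> t/(s+t)" using sp by auto
        show "s/(s+t) + t/(s+t) = 1" using sp by (simp add: add_divide_distrib[symmetric])
      qed
      moreover have "(s/(s+t)) *\<^sub>R ((1/s) *\<^sub>R x) + (t/(s+t)) *\<^sub>R ((1/t) *\<^sub>R y) = (1/(s+t)) *\<^sub>R (x + y)"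
        using sp by (simp add: scaleR_add_right)
      ultimately show "s + t \<in> ?T (x + y)" using sp by simp
    qed
    have h1: "mink K (x + y) - t \<le> mink K x" if "t \<in> ?T y" for t
      by (rule gr) (use key that in force)
    have "mink K (x + y) - mink K x \<le> mink K y"
      by (rule gr) (use h1 in force)
    thus "mink K (x + y) \<le> mink K x + mink K y" by simp
  next
    fix t :: real and x assume t: "t > 0"
    have "mink K (t *\<^sub>R x) / t \<le> mink K x"
    proof (rule gr)
      fix s assume s: "s \<in> ?T x"
      have "(1 / (t * s)) *\<^sub>R (t *\<^sub>R x) = (1/s) *\<^sub>R x" using t by simp
      hence "t * s \<in> ?T (t *\<^sub>R x)" using s t by simp
      hence "mink K (t *\<^sub>R x) \<le> t * s" by (rule lo)
      thus "mink K (t *\<^sub>R x) / t \<le> s" using t by (simp add: field_simps)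
    qed
    thus "mink K (t *\<^sub>R x) \<le> t * mink K x" using t by (simp add: field_simps)
  qed
qed

lemma separation:
  fixes K :: "'a::topological_real_vector set"
  assumes oK: "open K" and cK: "convex K" and K0: "0 \<in> K" and z: "z \<notin> K"
  shows "\<exists>F::'a \<Rightarrow> real. linear F \<and> continuous_on UNIV F \<and> 1 \<le> F z \<and> (\<forall>k\<in>K. F k \<le> 1)"
proof -
  note mp = mink_props[OF oK cK K0]
  obtain F where F: "linear F" "\<forall>x. F x \<le> mink K x" "1 \<le> F z"
    using hahn_banach_point[OF mp(1) mp(3)[OF z]] by blast
  have FK: "F k \<le> 1" if "k \<in> K" for k using F(2) mp(2)[OF that] by (meson order.trans)
  define M where "M = K \<inter> (\<lambda>s. (-1) *\<^sub>R s) ` K"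
  have oM: "open M" unfolding M_def using oK open_scale[OF oK, of "-1"] by auto
  have M0: "0 \<in> M" unfolding M_def using K0 by force
  have FM: "\<bar>F m\<bar> \<le> 1" if "m \<in> M" for m
  proof -
    from that obtain k where k: "m \<in> K" "k \<in> K" "m = (-1) *\<^sub>R k" unfolding M_def by auto
    have "F m = - F k" using k linear_neg[OF F(1)] by simp
    moreover have "F m \<le> 1" "F k \<le> 1" using FK k by auto
    ultimately show ?thesis by linarith
  qed
  have "continuous_on UNIV F"
    unfolding continuous_on_topological
  proof (intro ballI allI impI)
    fix x :: 'a and B :: "real set" assume B: "open B" "F x \<in> B"
    then obtain e where e: "e > 0" "\<forall>y. dist y (F x) < e \<longrightarrow> y \<in> B" by (auto simp: open_dist)
    define N where "N = (\<lambda>s. x + s) ` ((\<lambda>s. (e/2) *\<^sub>R s) ` M)"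
    have "open N" unfolding N_def using e by (intro open_translate open_scale oM) auto
    moreover have "x \<in> N" unfolding N_def using M0 by force
    moreover have "F y \<in> B" if "y \<in> N" for y
    proof -
      from that obtain m where m: "m \<in> M" "y = x + (e/2) *\<^sub>R m" unfolding N_def by auto
      have "F y = F x + (e/2) * F m" using m linear_add[OF F(1)] linear_cmul[OF F(1)] by simp
      hence "dist (F y) (F x) = (e/2) * \<bar>F m\<bar>" using e by (simp add: dist_real_def abs_mult)
      also have "\<dots> \<le> e/2" using FM[OF m(1)] e by (simp add: mult_left_le)
      finally show ?thesis using e by auto
    qed
    ultimately show "\<exists>A. open A \<and> x \<in> A \<and> (\<forall>y\<in>UNIV. y \<in> A \<longrightarrow> F y \<in> B)" by blast
  qed
  thus ?thesis using F FK by (intro exI[of _ F]) auto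
qed



theorem mainTheorem17:
  fixes f :: "'x::topological_real_vector \<Rightarrow> 'z::locally_convex_tvs set"
    and C :: "'z set" and x0 :: 'x and B :: "('z \<Rightarrow> real) set"
  assumes C_ne: "C \<noteq> {}" and C_closed: "closed C" and C_convex: "convex C" and C_cone: "cone C"
    and C_neg: "neg_dual_cone C \<noteq> {(\<lambda>_. 0)}"
    and f_F: "\<forall>x. f x \<in> FZC C"
    and f_convex: "\<forall>x. convex (f x)"
    and B_sub: "B \<subseteq> topdual"
    and B_gen: "{(\<lambda>z. t * zs z) | t zs. t \<ge> 0 \<and> zs \<in> B} = neg_dual_cone C"
    and B_sup: "\<forall>z. (SUP zs\<in>B. ereal (zs z)) < \<infinity>"
    and B_inf: "\<forall>V. is_nbhd V (0::'z) \<longrightarrow> (INF zs\<in>B. SUP z\<in>V. ereal (- zs z)) > 0"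
    and unif_lsc: "\<forall>\<epsilon>>0. \<exists>U. is_nbhd U x0 \<and>
        (\<forall>x\<in>U. \<forall>zs\<in>B. scalarization f zs x > scalarization f zs x0 - ereal \<epsilon>)"
  shows "hausdorff_upper_continuous_at f x0"
  unfolding hausdorff_upper_continuous_at_def
proof (intro allI impI)
  fix V :: "'z set" assume "is_nbhd V 0"
  then obtain W0 where W0: "open W0" "0 \<in> W0" "W0 \<subseteq> V" unfolding is_nbhd_def by blast
  obtain W where W: "open W" "0 \<in> W" "W \<subseteq> W0"
    "\<forall>x\<in>W. \<forall>y\<in>W. \<forall>u\<ge>0. \<forall>v\<ge>0. u + v = 1 \<longrightarrow> u *\<^sub>R x + v *\<^sub>R y \<in> W"
    using locally_convex[OF W0(1,2)] by blast
  have cW: "convex W" using W(4) unfolding convex_def by blast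
  define W' where "W' = (\<lambda>s. (-1::real) *\<^sub>R s) ` W"
  have "open W'" unfolding W'_def by (rule open_scale[OF W(1)]) simp
  moreover have "0 \<in> W'" unfolding W'_def using W(2) by force
  ultimately have "is_nbhd W' 0" unfolding is_nbhd_def by blast
  hence "0 < (INF zs\<in>B. SUP z\<in>W'. ereal (- zs z))" using B_inf by blast
  then obtain \<epsilon> where eps: "0 < ereal \<epsilon>" "ereal \<epsilon> < (INF zs\<in>B. SUP z\<in>W'. ereal (- zs z))"
    using ereal_dense2 by blast
  have eps0: "\<epsilon> > 0" using eps(1) by simp
  have hb: "\<exists>w\<in>W. \<epsilon> < b w" if "b \<in> B" for b
  proof -
    have "ereal \<epsilon> < (SUP z\<in>W'. ereal (- b z))" using less_INF_D[OF eps(2) that] .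
    then obtain w' where w'1: "w' \<in> W'" and w'2: "ereal \<epsilon> < ereal (- b w')"
      unfolding less_SUP_iff by blast
    from w'1 obtain w where w: "w \<in> W" "w' = (-1::real) *\<^sub>R w" unfolding W'_def by blast
    have "b \<in> topdual" using that B_sub by blast
    hence "linear b" by (simp add: topdual_def)
    hence "b w' = - b w" unfolding w(2) using linear_cmul[of b "-1" w] by simp
    hence "\<epsilon> < b w" using w'2 by simp
    thus ?thesis using w(1) by blast
  qed
  obtain U where U: "is_nbhd U x0"
    "\<forall>x\<in>U. \<forall>zs\<in>B. scalarization f zs x > scalarization f zs x0 - ereal \<epsilon>"
    using unif_lsc eps0 by blast
  have x0U: "x0 \<in> U" using U(1) unfolding is_nbhd_def by blast
  have "(\<lambda>_. 0) \<in> neg_dual_cone C"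
    unfolding neg_dual_cone_def topdual_def by (auto simp: linear_zero)
  then obtain t0 b0 where "b0 \<in> B" using B_gen by blast
  have "f x0 \<noteq> {}"
  proof
    assume e: "f x0 = {}"
    hence i: "scalarization f b0 x0 = \<infinity>" by (simp add: scalarization_def top_ereal_def)
    have "scalarization f b0 x0 > scalarization f b0 x0 - ereal \<epsilon>" using U(2) x0U \<open>b0 \<in> B\<close> by blast
    thus False using i by simp
  qed
  then obtain a0 where a0: "a0 \<in> f x0" by blast
  show "\<exists>U. is_nbhd U x0 \<and> (\<forall>x\<in>U. f x \<subseteq> set_plus_Z (f x0) V)"
  proof (intro exI conjI ballI subsetI)
    show "is_nbhd U x0" by (rule U(1))
    fix x z assume x: "x \<in> U" and z: "z \<in> f x"
    show "z \<in> set_plus_Z (f x0) V"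
    proof (rule ccontr)
      assume nz: "z \<notin> set_plus_Z (f x0) V"
      define K where "K = {a + w - a0 | a w. a \<in> f x0 \<and> w \<in> W}"
      have oK: "open K"
      proof (rule Topological_Spaces.openI)
        fix k assume "k \<in> K"
        then obtain a w where aw: "a \<in> f x0" "w \<in> W" "k = a + w - a0" unfolding K_def by blast
        let ?T = "(\<lambda>s. (a - a0) + s) ` W"
        have "open ?T" by (rule open_translate[OF W(1)])
        moreover have "k \<in> ?T" using aw by (auto simp: algebra_simps)
        moreover have "?T \<subseteq> K"
        proof
          fix y assume "y \<in> ?T"
          then obtain w' where w': "w' \<in> W" "y = (a - a0) + w'" by blast
          hence "y = a + w' - a0" by (simp add: algebra_simps)
          thus "y \<in> K" unfolding K_def using aw(1) w'(1) by blast
        qed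
        ultimately show "\<exists>T. open T \<and> k \<in> T \<and> T \<subseteq> K" by blast
      qed
      have cK: "convex K" unfolding convex_def
      proof (intro ballI allI impI)
        fix k1 k2 and u v :: real assume k: "k1 \<in> K" "k2 \<in> K" and uv: "0 \<le> u" "0 \<le> v" "u + v = 1"
        obtain a1 w1 where 1: "a1 \<in> f x0" "w1 \<in> W" "k1 = a1 + w1 - a0" using k(1) unfolding K_def by blast
        obtain a2 w2 where 2: "a2 \<in> f x0" "w2 \<in> W" "k2 = a2 + w2 - a0" using k(2) unfolding K_def by blast
        have "u *\<^sub>R a1 + v *\<^sub>R a2 \<in> f x0" using convexD[OF f_convex[rule_format, of x0] 1(1) 2(1) uv] .
        moreover have "u *\<^sub>R w1 + v *\<^sub>R w2 \<in> W" using convexD[OF cW 1(2) 2(2) uv] .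
        moreover have "u *\<^sub>R k1 + v *\<^sub>R k2 = (u *\<^sub>R a1 + v *\<^sub>R a2) + (u *\<^sub>R w1 + v *\<^sub>R w2) - a0"
        proof -
          have "u *\<^sub>R k1 + v *\<^sub>R k2 = (u *\<^sub>R a1 + v *\<^sub>R a2) + (u *\<^sub>R w1 + v *\<^sub>R w2) - (u + v) *\<^sub>R a0"
            unfolding 1(3) 2(3) by (simp add: algebra_simps)
          thus ?thesis using uv by simp
        qed
        ultimately show "u *\<^sub>R k1 + v *\<^sub>R k2 \<in> K" unfolding K_def by blast
      qed
      have K0: "0 \<in> K" unfolding K_def using a0 W(2) by force
      have zK: "z - a0 \<notin> K"
      proof
        assume "z - a0 \<in> K"
        then obtain a w where aw: "a \<in> f x0" "w \<in> W" "z - a0 = a + w - a0" unfolding K_def by blast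
        hence "z = a + w" by (simp add: algebra_simps)
        hence "z \<in> set_plus_Z (f x0) V" unfolding set_plus_Z_def using aw W(3) W0(3) by blast
        thus False using nz by blast
      qed
      obtain F :: "'z \<Rightarrow> real" where F: "linear F" "continuous_on UNIV F" "1 \<le> F (z - a0)" "\<forall>k\<in>K. F k \<le> 1"
        using separation[OF oK cK K0 zK] by blast
      have Faw: "F a + F w \<le> F z" if "a \<in> f x0" "w \<in> W" for a w
      proof -
        have "a + w - a0 \<in> K" unfolding K_def using that by blast
        hence "F (a + w - a0) \<le> F (z - a0)" using F(3,4) by force
        thus ?thesis using linear_diff[OF F(1)] linear_add[OF F(1)] by simp
      qed
      have "F \<in> neg_dual_cone C"
        unfolding neg_dual_cone_def topdual_def
      proof (intro CollectI conjI ballI F(1) F(2))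
        fix c assume c: "c \<in> C"
        show "F c \<le> 0"
        proof (rule ccontr)
          assume "\<not> F c \<le> 0"
          hence Fc: "F c > 0" by simp
          define s where "s = (\<bar>F z - F a0\<bar> + 1) / F c"
          have s0: "s \<ge> 0" unfolding s_def using Fc by simp
          have "s *\<^sub>R c \<in> C" using C_cone[unfolded cone_def, rule_format, OF c s0] .
          hence "a0 + s *\<^sub>R c \<in> set_plus_Z (f x0) C" unfolding set_plus_Z_def using a0 by blast
          moreover have "f x0 = closure (set_plus_Z (f x0) C)" using f_F unfolding FZC_def by blast
          ultimately have "a0 + s *\<^sub>R c \<in> f x0" using closure_subset by blast
          hence "F (a0 + s *\<^sub>R c) + F 0 \<le> F z" using Faw W(2) by blast
          hence "F a0 + s * F c \<le> F z" using linear_add[OF F(1)] linear_cmul[OF F(1)] linear_0[OF F(1)] by simp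
          moreover have "s * F c = \<bar>F z - F a0\<bar> + 1" unfolding s_def using Fc by simp
          ultimately show False by linarith
        qed
      qed
      hence "F \<in> {(\<lambda>z. t * zs z) | t zs. t \<ge> 0 \<and> zs \<in> B}" using B_gen by simp
      then obtain t b where tb: "t \<ge> 0" "b \<in> B" "F = (\<lambda>z. t * b z)" by blast
      have t0: "t > 0"
      proof (rule ccontr)
        assume "\<not> t > 0" hence "t = 0" using tb by simp
        thus False using F(3) tb by simp
      qed
      obtain w where w: "w \<in> W" "\<epsilon> < b w" using hb[OF tb(2)] by blast
      have ba: "- b z + \<epsilon> \<le> - b a" if "a \<in> f x0" for a
      proof -
        have "t * b a + t * b w \<le> t * b z" using Faw[OF that w(1)] tb by simp
        hence "b a + b w \<le> b z" using t0 by (simp add: distrib_left[symmetric])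
        thus ?thesis using w by linarith
      qed
      have s1: "scalarization f b x \<le> ereal (- b z)"
        unfolding scalarization_def using z by (rule INF_lower)
      have "ereal (- b z + \<epsilon>) \<le> scalarization f b x0"
        unfolding scalarization_def by (rule INF_greatest) (use ba in simp)
      hence "ereal (- b z + \<epsilon>) - ereal \<epsilon> \<le> scalarization f b x0 - ereal \<epsilon>"
        by (rule ereal_minus_mono) simp
      hence "ereal (- b z) \<le> scalarization f b x0 - ereal \<epsilon>" by simp
      hence "scalarization f b x \<le> scalarization f b x0 - ereal \<epsilon>" using s1 by (rule order.trans[rotated])
      moreover have "scalarization f b x > scalarization f b x0 - ereal \<epsilon>" using U(2) x tb(2) by blast
      ultimately show False by simp
    qed
  qed
qed


end
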